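(* Let $n$ be a positive integer and let $F=O\times\{0,n\}\subset\mathbb{Z}^3$ be the filler, where $O=\{-1,0,1\}^2\setminus\{(0,0)\}$. If $E\subset\mathbb{Z}^3$ contains some translate of $\{-1,0,1\}^2\times\{0\}$ as a subset, then $F$ does not tile $E$, i.e. there is no $W\subset\mathbb{Z}^3$ with $W\oplus F$ non-overlapping and $W\oplus F=E$.
   Context: $A\oplus B=\{a+b: a\in A, b\in B\}$; it is non-overlapping if each element arises from a unique pair $(a,b)$. *)

theory Defs
  imports Main
begin

type_synonym pt3 = "int \<times> int \<times> int"

definition add3 :: "pt3 \<Rightarrow> pt3 \<Rightarrow> pt3" where
  "add3 p q = (fst p + fst q, fst (snd p) + fst (snd q), snd (snd p) + snd (snd q))"

definition msum :: "pt3 set \<Rightarrow> pt3 set \<Rightarrow> pt3 set" where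
  "msum A B = {add3 a b | a b. a \<in> A \<and> b \<in> B}"

definition non_overlapping :: "pt3 set \<Rightarrow> pt3 set \<Rightarrow> bool" where
  "non_overlapping A B = (\<forall>a\<in>A. \<forall>b\<in>B. \<forall>a'\<in>A. \<forall>b'\<in>B.
      add3 a b = add3 a' b' \<longrightarrow> a = a' \<and> b = b')"

definition tiles :: "pt3 set \<Rightarrow> pt3 set \<Rightarrow> bool" where
  "tiles F E = (\<exists>W. non_overlapping W F \<and> msum W F = E)"

definition square3 :: "pt3 set" where
  "square3 = {(x, y, 0) | x y. x \<in> {-1..1} \<and> y \<in> {-1..1}}"

definition ring_O :: "(int \<times> int) set" where
  "ring_O = ({-1..1} \<times> {-1..1}) - {(0, 0)}"

definition filler :: "nat \<Rightarrow> pt3 set" where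
  "filler n = {(x, y, z) | x y z. (x, y) \<in> ring_O \<and> z \<in> {0, int n}}"

end

theory Submission
  imports Defs
begin

lemma ring_shift:
  assumes "(x2, y2) \<in> ring_O"
  shows "\<exists>d1 d2. (d1, d2) \<in> ring_O \<and> (d1 + x2, d2 + y2) \<in> ring_O"
proof -
  have x: "x2 \<in> {-1,0,1}" and y: "y2 \<in> {-1,0,1}" and nz: "(x2,y2) \<noteq> (0,0)"
    using assms by (auto simp: ring_O_def)
  show ?thesis
  proof (cases "x2 = 0")
    case True
    then show ?thesis using y nz
      by (intro exI[of _ 1] exI[of _ 0]) (auto simp: ring_O_def)
  next
    case False
    then show ?thesis using x y
      by (intro exI[of _ "-x2"] exI[of _ "if y2 = 0 then 1 else 0"]) (auto simp: ring_O_def)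
  qed
qed

theorem lemma4p2:
  fixes n :: nat and E :: "pt3 set"
  assumes "n > 0"
    and "\<exists>t. (\<lambda>p. add3 t p) ` square3 \<subseteq> E"
  shows "\<not> tiles (filler n) E"
proof
  assume "tiles (filler n) E"
  then obtain W where no: "non_overlapping W (filler n)" and ms: "msum W (filler n) = E"
    unfolding tiles_def by blast
  obtain a b c where sq: "(\<lambda>p. add3 (a,b,c) p) ` square3 \<subseteq> E"
    using assms(2) by auto
  have "(0,0,0) \<in> square3" by (auto simp: square3_def)
  hence "(a,b,c) \<in> E" using sq by (force simp: add3_def)
  then obtain w1 f1 where w1: "w1 \<in> W" "f1 \<in> filler n" "add3 w1 f1 = (a,b,c)"
    using ms unfolding msum_def by auto
  obtain x1 y1 z1 where f1: "f1 = (x1,y1,z1)" "(x1,y1) \<in> ring_O" "z1 \<in> {0, int n}"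
    using w1(2) unfolding filler_def by blast
  have "(-x1, -y1, 0) \<in> square3" using f1(2) by (auto simp: square3_def ring_O_def)
  hence "(a-x1,b-y1,c) \<in> E" using sq by (force simp: add3_def)
  then obtain w2 f2 where w2: "w2 \<in> W" "f2 \<in> filler n" "add3 w2 f2 = (a-x1,b-y1,c)"
    using ms unfolding msum_def by auto
  obtain x2 y2 z2 where f2: "f2 = (x2,y2,z2)" "(x2,y2) \<in> ring_O" "z2 \<in> {0, int n}"
    using w2(2) unfolding filler_def by blast
  obtain d1 d2 where d: "(d1, d2) \<in> ring_O" "(d1 + x2, d2 + y2) \<in> ring_O"
    using ring_shift[OF f2(2)] by blast
  have g1: "(d1,d2,z1) \<in> filler n" using d f1 unfolding filler_def by blast
  have g2: "(d1+x2,d2+y2,z2) \<in> filler n" using d f2 unfolding filler_def by blast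
  have "add3 w1 (d1,d2,z1) = add3 w2 (d1+x2,d2+y2,z2)"
    using w1(3) w2(3) f1(1) f2(1) by (cases w1; cases w2; simp add: add3_def)
  hence "w1 = w2" using no w1(1) w2(1) g1 g2 unfolding non_overlapping_def by blast
  hence "x2 = 0 \<and> y2 = 0"
    using w1(3) w2(3) f1(1) f2(1) by (cases w1; simp add: add3_def)
  thus False using f2(2) by (simp add: ring_O_def)
qed

end
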